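(* Let $X$ be an $X$-set parameter, let $G$ and $G'$ be graphs with no isolated vertices, and suppose $\varphi:\mathscr{X}^{\rm TAR}(G)\to\mathscr{X}^{\rm TAR}(G')$ is a graph isomorphism. Then $|\varphi(S)|=|S|$ for every $X$-set $S$ of $G$ if and only if there exists a bijection $\psi:V(G)\to V(G')$ such that $\psi(S)=\varphi(S)$ for every $X$-set $S$ of $G$ (where $\psi(S)=\{\psi(s):s\in S\}$).
   Context: All graphs are simple, finite, with nonempty vertex set. An $X$-set parameter is a graph parameter $X(G)$ defined as the minimum cardinality of an $X$-set of $G$, where the $X$-sets of each graph are subsets of its vertex set determined by some property satisfying: (1) supersets (within $V(G)$) of $X$-sets are $X$-sets; (2) the empty set is never an $X$-set; (3) an $X$-set of a disconnected graph is the union of an $X$-set of each component; (4) if $G$ has no isolated vertices, every set of $|V(G)|-1$ vertices is an $X$-set. The $X$-TAR graph $\mathscr{X}^{\rm TAR}(G)$ has as vertices all $X$-sets of $G$, with $S_1,S_2$ adjacent iff $|S_1\ominus S_2|=1$ (symmetric difference). *)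

theory Defs
  imports Main
begin

type_synonym 'v graph = "'v set \<times> 'v set set"

definition verts :: "'v graph \<Rightarrow> 'v set" where
  "verts G = fst G"

definition edges :: "'v graph \<Rightarrow> 'v set set" where
  "edges G = snd G"

definition graph :: "'v graph \<Rightarrow> bool" where
  "graph G \<longleftrightarrow> finite (verts G) \<and> verts G \<noteq> {} \<and>
     (\<forall>e \<in> edges G. e \<subseteq> verts G \<and> card e = 2)"

definition adj :: "'v graph \<Rightarrow> 'v \<Rightarrow> 'v \<Rightarrow> bool" where
  "adj G u v \<longleftrightarrow> {u, v} \<in> edges G"

definition no_isolated :: "'v graph \<Rightarrow> bool" where
  "no_isolated G \<longleftrightarrow> (\<forall>v \<in> verts G. \<exists>u. adj G v u)"

definition reachable :: "'v graph \<Rightarrow> 'v \<Rightarrow> 'v \<Rightarrow> bool" where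
  "reachable G u v \<longleftrightarrow> u \<in> verts G \<and> (adj G)\<^sup>*\<^sup>* u v"

definition components :: "'v graph \<Rightarrow> 'v set set" where
  "components G = {{w. reachable G v w} | v. v \<in> verts G}"

definition connected_graph :: "'v graph \<Rightarrow> bool" where
  "connected_graph G \<longleftrightarrow> (\<forall>u \<in> verts G. \<forall>v \<in> verts G. reachable G u v)"

definition induced :: "'v graph \<Rightarrow> 'v set \<Rightarrow> 'v graph" where
  "induced G C = (C, {e \<in> edges G. e \<subseteq> C})"

definition X_set_parameter :: "('v graph \<Rightarrow> 'v set set) \<Rightarrow> bool" where
  "X_set_parameter Xs \<longleftrightarrow>
     (\<forall>G. graph G \<longrightarrow>
        Xs G \<subseteq> Pow (verts G) \<and>
        (\<forall>S T. S \<in> Xs G \<and> S \<subseteq> T \<and> T \<subseteq> verts G \<longrightarrow> T \<in> Xs G) \<and>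
        {} \<notin> Xs G \<and>
        (\<not> connected_graph G \<longrightarrow>
           (\<forall>S. S \<in> Xs G \<longleftrightarrow>
              (\<exists>f. (\<forall>C \<in> components G. f C \<in> Xs (induced G C)) \<and>
                   S = \<Union> (f ` components G)))) \<and>
        (no_isolated G \<longrightarrow>
           (\<forall>S. S \<subseteq> verts G \<and> card S = card (verts G) - 1 \<longrightarrow> S \<in> Xs G)))"

definition tar_adj :: "'v set \<Rightarrow> 'v set \<Rightarrow> bool" where
  "tar_adj S1 S2 \<longleftrightarrow> card ((S1 - S2) \<union> (S2 - S1)) = 1"

definition tar_iso :: "('v graph \<Rightarrow> 'v set set) \<Rightarrow> 'v graph \<Rightarrow> 'v graph
     \<Rightarrow> ('v set \<Rightarrow> 'v set) \<Rightarrow> bool" where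
  "tar_iso Xs G G' \<phi> \<longleftrightarrow> bij_betw \<phi> (Xs G) (Xs G') \<and>
     (\<forall>S1 \<in> Xs G. \<forall>S2 \<in> Xs G. tar_adj S1 S2 \<longleftrightarrow> tar_adj (\<phi> S1) (\<phi> S2))"

end

theory Submission
  imports Defs
begin

lemma tar_adj_smaller:
  assumes "finite A" "finite B" "tar_adj A B" "card B < card A"
  shows "\<exists>y\<in>A. B = A - {y}"
proof -
  from assms(3) obtain y where y: "(A - B) \<union> (B - A) = {y}"
    unfolding tar_adj_def by (rule card_1_singletonE)
  show ?thesis
  proof (cases "y \<in> A")
    case True
    have "B = A - {y}" using y True by blast
    with True show ?thesis by (intro bexI[of _ y])
  next
    case False
    have "A \<subseteq> B"
    proof
      fix a assume a: "a \<in> A"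
      show "a \<in> B"
      proof (rule ccontr)
        assume "a \<notin> B"
        then have "a \<in> (A - B) \<union> (B - A)" using a by simp
        then have "a = y" using y by simp
        then show False using a False by simp
      qed
    qed
    then have "card A \<le> card B" using assms(2) card_mono by blast
    then show ?thesis using assms(4) by simp
  qed
qed

lemma tar_adj_ins:
  assumes "x \<notin> S"
  shows "tar_adj (insert x S) S"
proof -
  have "(insert x S - S) \<union> (S - insert x S) = {x}" using assms by blast
  then show ?thesis unfolding tar_adj_def by simp
qed

theorem theorem2p12:
  fixes Xs :: "'v graph \<Rightarrow> 'v set set"
    and G G' :: "'v graph"
    and \<phi> :: "'v set \<Rightarrow> 'v set"
  assumes "X_set_parameter Xs"
    and "graph G" and "graph G'"
    and "no_isolated G" and "no_isolated G'"
    and "tar_iso Xs G G' \<phi>"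
  shows "(\<forall>S \<in> Xs G. card (\<phi> S) = card S) \<longleftrightarrow>
         (\<exists>\<psi>. bij_betw \<psi> (verts G) (verts G') \<and> (\<forall>S \<in> Xs G. \<psi> ` S = \<phi> S))"
proof
  assume cp: "\<forall>S \<in> Xs G. card (\<phi> S) = card S"
  define V where "V = verts G"
  define V' where "V' = verts G'"
  have fin: "finite V" and ne: "V \<noteq> {}" using assms(2) unfolding graph_def V_def by auto
  have fin': "finite V'" and ne': "V' \<noteq> {}" using assms(3) unfolding graph_def V'_def by auto
  note P = assms(1)[unfolded X_set_parameter_def, THEN spec[of _ G], THEN mp, OF assms(2)]
  note P' = assms(1)[unfolded X_set_parameter_def, THEN spec[of _ G'], THEN mp, OF assms(3)]
  have sub: "Xs G \<subseteq> Pow V" unfolding V_def by (rule P[THEN conjunct1])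
  have up: "\<And>S T. S \<in> Xs G \<Longrightarrow> S \<subseteq> T \<Longrightarrow> T \<subseteq> V \<Longrightarrow> T \<in> Xs G"
    unfolding V_def using P[THEN conjunct2, THEN conjunct1] by blast
  have co1: "\<And>S. S \<subseteq> V \<Longrightarrow> card S = card V - 1 \<Longrightarrow> S \<in> Xs G"
    unfolding V_def using P[THEN conjunct2, THEN conjunct2, THEN conjunct2, THEN conjunct2] assms(4) by blast
  have sub': "Xs G' \<subseteq> Pow V'" unfolding V'_def by (rule P'[THEN conjunct1])
  have up': "\<And>S T. S \<in> Xs G' \<Longrightarrow> S \<subseteq> T \<Longrightarrow> T \<subseteq> V' \<Longrightarrow> T \<in> Xs G'"
    unfolding V'_def using P'[THEN conjunct2, THEN conjunct1] by blast
  have co1': "\<And>S. S \<subseteq> V' \<Longrightarrow> card S = card V' - 1 \<Longrightarrow> S \<in> Xs G'"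
    unfolding V'_def using P'[THEN conjunct2, THEN conjunct2, THEN conjunct2, THEN conjunct2] assms(5) by blast
  have rmX: "V - {v} \<in> Xs G" if "v \<in> V" for v
    using co1[of "V - {v}"] that fin by auto
  have VX: "V \<in> Xs G"
  proof -
    obtain v where v: "v \<in> V" using ne by blast
    show ?thesis using up[OF rmX[OF v]] by blast
  qed
  have VX': "V' \<in> Xs G'"
  proof -
    obtain v where "v \<in> V'" using ne' by blast
    then have "V' - {v} \<in> Xs G'" using co1'[of "V' - {v}"] fin' by auto
    then show ?thesis using up' by blast
  qed
  have bij: "bij_betw \<phi> (Xs G) (Xs G')"
    and adj: "\<And>S1 S2. S1 \<in> Xs G \<Longrightarrow> S2 \<in> Xs G \<Longrightarrow> tar_adj S1 S2 \<longleftrightarrow> tar_adj (\<phi> S1) (\<phi> S2)"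
    using assms(6) unfolding tar_iso_def by simp_all
  have phX: "S \<in> Xs G \<Longrightarrow> \<phi> S \<in> Xs G'" for S by (rule bij_betw_apply[OF bij])
  have phsub: "S \<in> Xs G \<Longrightarrow> \<phi> S \<subseteq> V'" for S using phX sub' by blast
  have injp: "inj_on \<phi> (Xs G)" by (rule bij_betw_imp_inj_on[OF bij])
  have "V' \<in> \<phi> ` Xs G" using bij VX' by (simp add: bij_betw_def)
  then obtain S0 where S0: "S0 \<in> Xs G" "\<phi> S0 = V'" by (auto elim: imageE)
  have "card V' = card S0" using cp S0 by metis
  also have "\<dots> \<le> card V" using S0(1) sub fin by (auto intro: card_mono)
  finally have "card V' \<le> card V" .
  moreover have "card V = card (\<phi> V)" using cp VX by simp
  moreover have "card (\<phi> V) \<le> card V'" by (rule card_mono[OF fin' phsub[OF VX]])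
  ultimately have cV: "card V = card V'" by simp
  have phV: "\<phi> V = V'" using card_subset_eq[OF fin' phsub[OF VX]] cp VX cV by simp
  have cpos: "card V > 0" using fin ne by (simp add: card_gt_0_iff)
  have rem: "\<exists>y\<in>V'. \<phi> (V - {v}) = V' - {y}" if v: "v \<in> V" for v
  proof -
    have "tar_adj V (V - {v})" using tar_adj_ins[of v "V - {v}"] v by (simp add: insert_absorb)
    then have "tar_adj V' (\<phi> (V - {v}))" using adj[OF VX rmX[OF v]] phV by simp
    moreover have "card (\<phi> (V - {v})) < card V'"
      using cp rmX[OF v] cV cpos fin v by simp
    moreover have "finite (\<phi> (V - {v}))" using phsub[OF rmX[OF v]] fin' finite_subset by blast
    ultimately show ?thesis using tar_adj_smaller fin' by blast
  qed
  define \<psi> where "\<psi> v = (SOME y. y \<in> V' \<and> \<phi> (V - {v}) = V' - {y})" for v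
  have psi: "\<psi> v \<in> V' \<and> \<phi> (V - {v}) = V' - {\<psi> v}" if "v \<in> V" for v
    unfolding \<psi>_def using someI_ex[OF rem[OF that, unfolded Bex_def]] .
  have inj: "inj_on \<psi> V"
  proof (rule inj_onI)
    fix u v assume u: "u \<in> V" and v: "v \<in> V" and e: "\<psi> u = \<psi> v"
    then have "\<phi> (V - {u}) = \<phi> (V - {v})" using psi by metis
    then have "V - {u} = V - {v}" using injp rmX u v inj_onD by metis
    then show "u = v" using u by blast
  qed
  have imsub: "\<psi> ` V \<subseteq> V'" using psi by blast
  have im: "\<psi> ` V = V'"
    using card_subset_eq[OF fin' imsub] card_image[OF inj] cV by simp
  have bijpsi: "bij_betw \<psi> V V'" using inj im bij_betw_def by blast
  have main: "\<forall>S. S \<in> Xs G \<longrightarrow> card V - card S = k \<longrightarrow> \<psi> ` S = \<phi> S" for k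
  proof (induction k rule: less_induct)
    case (less k)
    show ?case
    proof (intro allI impI)
      fix S assume S: "S \<in> Xs G" and k: "card V - card S = k"
      have SV: "S \<subseteq> V" using S sub by blast
      have finS: "finite S" using SV fin finite_subset by blast
      show "\<psi> ` S = \<phi> S"
      proof (cases "V - S = {}")
        case True
        then have "S = V" using SV by blast
        then show ?thesis using im phV by simp
      next
        case False
        then obtain x where x: "x \<in> V - S" by blast
        show ?thesis
        proof (cases "V - S = {x}")
          case True
          then have Sx: "S = V - {x}" using SV x by blast
          have "\<psi> ` (V - {x}) = \<psi> ` V - {\<psi> x}" using inj x by (simp add: inj_on_image_set_diff)
          then show ?thesis using Sx psi x im by simp
        next
          case False
          then obtain w where w: "w \<in> V - S" "w \<noteq> x" using x by blast
          have step: "\<phi> S \<subseteq> \<psi> ` S \<union> {\<psi> z}" if z: "z \<in> V - S" for z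
          proof -
            have zX: "insert z S \<in> Xs G" using up[OF S] z SV by blast
            have cz: "card (insert z S) = Suc (card S)" using z finS by simp
            have "card (insert z S) \<le> card V" using card_mono[OF fin] z SV by simp
            then have "card V - card (insert z S) < k" using cz k by simp
            then have IH: "\<psi> ` insert z S = \<phi> (insert z S)"
              by (rule less.IH[rule_format, OF _ zX refl])
            have zS: "z \<notin> S" using z by blast
            have "tar_adj (insert z S) S" by (rule tar_adj_ins[OF zS])
            then have a1: "tar_adj (\<phi> (insert z S)) (\<phi> S)"
              using adj[OF zX S] by simp
            have c1: "card (\<phi> S) < card (\<phi> (insert z S))" using cp S zX cz by simp
            have f1: "finite (\<phi> S)" using phsub[OF S] fin' finite_subset by blast
            have f2: "finite (\<phi> (insert z S))" using phsub[OF zX] fin' finite_subset by blast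
            obtain y where "\<phi> S = \<phi> (insert z S) - {y}"
              using tar_adj_smaller[OF f2 f1 a1 c1] by blast
            then show ?thesis using IH by auto
          qed
          have "\<psi> x \<noteq> \<psi> w" using inj w x inj_on_eq_iff by (metis DiffD1)
          then have "\<phi> S \<subseteq> \<psi> ` S" using step[OF x] step[OF w(1)] by blast
          moreover have "card (\<psi> ` S) = card (\<phi> S)"
            using card_image[OF inj_on_subset[OF inj SV]] cp S by simp
          moreover have "finite (\<psi> ` S)" using finS by simp
          ultimately show ?thesis using card_subset_eq[of "\<psi> ` S" "\<phi> S"] by simp
        qed
      qed
    qed
  qed
  show "\<exists>\<psi>. bij_betw \<psi> (verts G) (verts G') \<and> (\<forall>S \<in> Xs G. \<psi> ` S = \<phi> S)"
  proof (intro exI[of _ \<psi>] conjI ballI)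
    show "bij_betw \<psi> (verts G) (verts G')" using bijpsi by (simp add: V_def V'_def)
  next
    fix S assume "S \<in> Xs G"
    then show "\<psi> ` S = \<phi> S" using main[of "card V - card S"] by blast
  qed
next
  assume "\<exists>\<psi>. bij_betw \<psi> (verts G) (verts G') \<and> (\<forall>S \<in> Xs G. \<psi> ` S = \<phi> S)"
  then obtain \<psi> where b: "bij_betw \<psi> (verts G) (verts G')" and e: "\<forall>S \<in> Xs G. \<psi> ` S = \<phi> S" by blast
  note P = assms(1)[unfolded X_set_parameter_def, THEN spec[of _ G], THEN mp, OF assms(2)]
  have sub: "Xs G \<subseteq> Pow (verts G)" by (rule P[THEN conjunct1])
  show "\<forall>S \<in> Xs G. card (\<phi> S) = card S"
  proof
    fix S assume S: "S \<in> Xs G"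
    then have "S \<subseteq> verts G" using sub by blast
    then have "inj_on \<psi> S" using bij_betw_imp_inj_on[OF b] inj_on_subset by blast
    then have "card (\<psi> ` S) = card S" by (rule card_image)
    then show "card (\<phi> S) = card S" using e S by simp
  qed
qed

end
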